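(* Let $A$ be an $n\times m$ binary matrix with $R_{binary}(A)=n$. Then $A$ has the Augmentation property for the binary rank.
   Context: $R_{binary}(A)$ is the least $k$ such that $A=UV$ with $U\in\{0,1\}^{n\times k}$, $V\in\{0,1\}^{k\times m}$, ordinary arithmetic. $A$ has the Augmentation property for the binary rank if for every collection of binary column vectors $x_1,\dots,x_t$ of length $n$ with $R_{binary}(A|x_i)=R_{binary}(A)$ for all $i$, also $R_{binary}(A|x_1,\dots,x_t)=R_{binary}(A)$, where $(A|x_1,\dots,x_t)$ is $A$ with these columns appended. *)

theory Defs
  imports "Jordan_Normal_Form.Matrix"
begin

definition binary_mat :: "int mat \<Rightarrow> bool" where
  "binary_mat A \<longleftrightarrow> (\<forall>i<dim_row A. \<forall>j<dim_col A. A $$ (i,j) \<in> {0,1})"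

definition binary_vec :: "int vec \<Rightarrow> bool" where
  "binary_vec x \<longleftrightarrow> (\<forall>i<dim_vec x. x $ i \<in> {0,1})"

definition binary_factorizable :: "int mat \<Rightarrow> nat \<Rightarrow> bool" where
  "binary_factorizable A k \<longleftrightarrow>
     (\<exists>U V. U \<in> carrier_mat (dim_row A) k \<and> V \<in> carrier_mat k (dim_col A) \<and>
            binary_mat U \<and> binary_mat V \<and> A = U * V)"

definition binary_rank :: "int mat \<Rightarrow> nat" where
  "binary_rank A = (LEAST k. binary_factorizable A k)"

definition append_cols :: "int mat \<Rightarrow> int vec list \<Rightarrow> int mat" where
  "append_cols A xs = mat (dim_row A) (dim_col A + length xs)
     (\<lambda>(i,j). if j < dim_col A then A $$ (i,j) else (xs ! (j - dim_col A)) $ i)"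

definition augmentation_property :: "int mat \<Rightarrow> bool" where
  "augmentation_property A \<longleftrightarrow>
     (\<forall>xs. (\<forall>x\<in>set xs. dim_vec x = dim_row A \<and> binary_vec x) \<longrightarrow>
           (\<forall>x\<in>set xs. binary_rank (append_cols A [x]) = binary_rank A) \<longrightarrow>
           binary_rank (append_cols A xs) = binary_rank A)"

end

theory Submission
  imports Defs
begin

lemma bf_id:
  assumes "binary_mat M"
  shows "binary_factorizable M (dim_row M)"
  unfolding binary_factorizable_def
  apply (rule exI[of _ "1\<^sub>m (dim_row M)"], rule exI[of _ M])
  using assms by (auto simp: binary_mat_def)

lemma append_binary:
  assumes "binary_mat A" "\<forall>x\<in>set xs. dim_vec x = dim_row A \<and> binary_vec x"
  shows "binary_mat (append_cols A xs)"
  using assms unfolding binary_mat_def append_cols_def binary_vec_def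
  by auto

lemma bf_restrict:
  assumes "binary_factorizable (append_cols A xs) k"
  shows "binary_factorizable A k"
proof -
  let ?M = "append_cols A xs"
  obtain U V where U: "U \<in> carrier_mat (dim_row A) k" and V: "V \<in> carrier_mat k (dim_col A + length xs)"
    and bU: "binary_mat U" and bV: "binary_mat V" and e: "?M = U * V"
    using assms unfolding binary_factorizable_def append_cols_def by auto
  define V' where "V' = mat k (dim_col A) (\<lambda>(i,j). V $$ (i,j))"
  have V': "V' \<in> carrier_mat k (dim_col A)" unfolding V'_def by auto
  have bV': "binary_mat V'" using bV V unfolding binary_mat_def V'_def by auto
  have "A = U * V'"
  proof (rule eq_matI)
    fix i j assume i: "i < dim_row (U * V')" and j: "j < dim_col (U * V')"
    hence i': "i < dim_row A" and j': "j < dim_col A" using U V' by auto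
    have "col V' j = col V j"
      using V j' unfolding V'_def by (auto intro!: eq_vecI)
    hence "(U * V') $$ (i,j) = (U * V) $$ (i,j)"
      using U V V' i' j' by (simp add: times_mat_def)
    also have "\<dots> = ?M $$ (i,j)" using e by simp
    also have "\<dots> = A $$ (i,j)" using i' j' unfolding append_cols_def by simp
    finally show "A $$ (i,j) = (U * V') $$ (i,j)" by simp
  qed (use U V' in auto)
  thus ?thesis unfolding binary_factorizable_def using U V' bU bV' by blast
qed

theorem mainTheorem10:
  fixes A :: "int mat" and n m :: nat
  assumes "A \<in> carrier_mat n m"
    and "binary_mat A"
    and "binary_rank A = n"
  shows "augmentation_property A"
  unfolding augmentation_property_def
proof (intro allI impI)
  fix xs assume h: "\<forall>x\<in>set xs. dim_vec x = dim_row A \<and> binary_vec x"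
  let ?M = "append_cols A xs"
  have rM: "dim_row ?M = n" using assms(1) unfolding append_cols_def by simp
  have f: "binary_factorizable ?M n"
    using bf_id[OF append_binary[OF assms(2) h]] rM by simp
  have le: "binary_rank ?M \<le> n" unfolding binary_rank_def using f by (rule Least_le)
  have "binary_factorizable ?M (binary_rank ?M)" unfolding binary_rank_def using f by (rule LeastI)
  hence "binary_factorizable A (binary_rank ?M)" by (rule bf_restrict)
  hence "binary_rank A \<le> binary_rank ?M" unfolding binary_rank_def by (rule Least_le)
  thus "binary_rank ?M = binary_rank A" using le assms(3) by simp
qed

end
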